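(* Fix integers $q\ge 1$ and $k\ge 4$, and let $G(q,k)$ be the graph on vertex set $\{v_0,v_1,\ldots,v_{kq}\}$ in which, with all indices taken modulo $kq+1$, the neighbourhood of $v_i$ is $$\{v_{i-1},v_{i+1}\}\cup\{v_{i+kj+m} : m=2,3,\ldots,k-1,\ j=0,1,\ldots,q-1\}.$$ Then $G(q,k)$ is $2K_2$-free.
   Context: $2K_2$ denotes the disjoint union of two copies of $K_2$ (i.e. two disjoint edges with no edges between them). A graph is $H$-free if it contains no induced subgraph isomorphic to $H$. *)

theory Defs
  imports Main
begin

definition Gverts :: "int \<Rightarrow> int \<Rightarrow> int set" where
  "Gverts q k = {0..k*q}"

definition Gnbhd :: "int \<Rightarrow> int \<Rightarrow> int \<Rightarrow> int set" where
  "Gnbhd q k i =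
     {(i - 1) mod (k*q+1), (i + 1) mod (k*q+1)} \<union>
     {(i + k*j + m) mod (k*q+1) | m j. 2 \<le> m \<and> m \<le> k - 1 \<and> 0 \<le> j \<and> j \<le> q - 1}"

definition Gadj :: "int \<Rightarrow> int \<Rightarrow> int \<Rightarrow> int \<Rightarrow> bool" where
  "Gadj q k u v \<longleftrightarrow> u \<in> Gverts q k \<and> v \<in> Gverts q k \<and> v \<in> Gnbhd q k u"

definition twoK2_free :: "'a set \<Rightarrow> ('a \<Rightarrow> 'a \<Rightarrow> bool) \<Rightarrow> bool" where
  "twoK2_free V E \<longleftrightarrow>
     \<not> (\<exists>a\<in>V. \<exists>b\<in>V. \<exists>c\<in>V. \<exists>d\<in>V. distinct [a,b,c,d] \<and> E a b \<and> E c d \<and>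
          \<not> E a c \<and> \<not> E c a \<and> \<not> E a d \<and> \<not> E d a \<and>
          \<not> E b c \<and> \<not> E c b \<and> \<not> E b d \<and> \<not> E d b)"

end

theory Submission
  imports Defs
begin

lemma modeq:
  fixes n u v x :: int
  assumes "n > 0" "0 \<le> v" "v < n"
  shows "(v = (u + x) mod n) \<longleftrightarrow> ((v - u) mod n = x mod n)"
proof -
  have "v = v mod n" using assms by simp
  have "(v = (u + x) mod n) \<longleftrightarrow> (v mod n = (u + x) mod n)" using assms by simp
  also have "\<dots> \<longleftrightarrow> n dvd (u + x - v)" by (metis mod_eq_dvd_iff)
  also have "\<dots> \<longleftrightarrow> n dvd (x - (v - u))" by (simp add: algebra_simps)
  also have "\<dots> \<longleftrightarrow> x mod n = (v - u) mod n" by (metis mod_eq_dvd_iff)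
  finally show ?thesis by auto
qed

lemma m1mod:
  fixes a :: int assumes "a \<ge> 0" shows "(-1) mod (a+1) = a"
proof -
  have "(-1) mod (a+1) = (a + (-1)*(a+1)) mod (a+1)" by simp
  also have "\<dots> = a mod (a+1)" by (rule mod_mult_self1)
  also have "\<dots> = a" using assms by simp
  finally show ?thesis .
qed

definition Rset :: "int \<Rightarrow> int \<Rightarrow> int set" where
  "Rset q k = {1, k*q} \<union> {k*j + m | m j. 2 \<le> m \<and> m \<le> k - 1 \<and> 0 \<le> j \<and> j \<le> q - 1}"

lemma adjR:
  assumes q: "q \<ge> 1" and k: "k \<ge> 4"
  shows "Gadj q k u v \<longleftrightarrow> u \<in> Gverts q k \<and> v \<in> Gverts q k \<and> (v - u) mod (k*q+1) \<in> Rset q k"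
proof -
  let ?n = "k*q+1"
  have "k*q \<ge> k*1" using q k by (intro mult_left_mono) auto
  hence kq: "k*q \<ge> 4" using k by linarith
  have npos: "?n > 0" using kq by simp
  show ?thesis
  proof (cases "v \<in> Gverts q k")
    case False thus ?thesis by (simp add: Gadj_def)
  next
    case True
    hence v0: "0 \<le> v" "v < ?n" by (auto simp: Gverts_def)
    have "v \<in> Gnbhd q k u \<longleftrightarrow> (v - u) mod ?n \<in> Rset q k"
    proof
      assume "v \<in> Gnbhd q k u"
      then consider "v = (u - 1) mod ?n" | "v = (u + 1) mod ?n"
        | m j where "v = (u + k*j + m) mod ?n" "2 \<le> m" "m \<le> k - 1" "0 \<le> j" "j \<le> q - 1"
        unfolding Gnbhd_def by blast
      thus "(v - u) mod ?n \<in> Rset q k"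
      proof cases
        case 1
        hence "(v - u) mod ?n = (-1) mod ?n" using modeq[OF npos v0, of u "-1"] by simp
        also have "\<dots> = k*q" using kq by (intro m1mod) simp
        finally show ?thesis by (simp add: Rset_def)
      next
        case 2
        hence "(v - u) mod ?n = 1 mod ?n" using modeq[OF npos v0, of u "1"] by simp
        also have "\<dots> = 1" using kq by simp
        finally show ?thesis by (simp add: Rset_def)
      next
        case (3 m j)
        hence "(v - u) mod ?n = (k*j+m) mod ?n" using modeq[OF npos v0, of u "k*j+m"] by (simp add: add.assoc)
        also have "\<dots> = k*j+m"
        proof -
          have "k*j \<le> k*(q-1)" using 3 k by (intro mult_left_mono) auto
          hence "k*j + m < ?n" using 3 by (simp add: algebra_simps)
          moreover have "k*j \<ge> 0" using 3 k by simp
          ultimately show ?thesis using 3 by simp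
        qed
        finally show ?thesis using 3 unfolding Rset_def by blast
      qed
    next
      assume "(v - u) mod ?n \<in> Rset q k"
      then consider "(v - u) mod ?n = 1" | "(v - u) mod ?n = k*q"
        | m j where "(v - u) mod ?n = k*j + m" "2 \<le> m" "m \<le> k - 1" "0 \<le> j" "j \<le> q - 1"
        unfolding Rset_def by blast
      thus "v \<in> Gnbhd q k u"
      proof cases
        case 1
        hence "v = (u + 1) mod ?n" using modeq[OF npos v0, of u "1"] kq by simp
        thus ?thesis by (simp add: Gnbhd_def)
      next
        case 2
        have "(-1) mod ?n = k*q" using kq by (intro m1mod) simp
        hence "v = (u + -1) mod ?n" using modeq[OF npos v0, of u "-1"] 2 by simp
        thus ?thesis by (simp add: Gnbhd_def)
      next
        case (3 m j)
        have "(k*j+m) mod ?n = k*j+m"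
        proof -
          have "k*j \<le> k*(q-1)" using 3 k by (intro mult_left_mono) auto
          hence "k*j + m < ?n" using 3 by (simp add: algebra_simps)
          moreover have "k*j \<ge> 0" using 3 k by simp
          ultimately show ?thesis using 3 by simp
        qed
        hence "v = (u + (k*j+m)) mod ?n" using modeq[OF npos v0, of u "k*j+m"] 3 by simp
        hence "v = (u + k*j+m) mod ?n" by (simp add: add.assoc)
        thus ?thesis using 3 unfolding Gnbhd_def by blast
      qed
    qed
    thus ?thesis using True by (auto simp: Gadj_def)
  qed
qed


lemma nomult:
  fixes k x m :: int assumes "k > 0" "k*x = m" "0 < m" "m < k" shows False
proof (cases "x \<le> 0")
  case True
  hence "k*x \<le> 0" using assms(1) by (simp add: mult_nonneg_nonpos)
  thus False using assms by linarith
next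
  case False
  hence "k*x \<ge> k*1" using assms(1) by (intro mult_left_mono) auto
  thus False using assms by linarith
qed

lemma R_iff:
  assumes q: "q \<ge> 1" and k: "k \<ge> 4" and r: "0 \<le> r" "r < k*q+1"
  shows "r \<in> Rset q k \<longleftrightarrow> \<not> (\<exists>t. \<bar>t\<bar> \<le> q - 1 \<and> r = (k*t) mod (k*q+1))"
proof
  assume R: "r \<in> Rset q k"
  show "\<not> (\<exists>t. \<bar>t\<bar> \<le> q - 1 \<and> r = (k*t) mod (k*q+1))"
  proof
    assume "\<exists>t. \<bar>t\<bar> \<le> q - 1 \<and> r = (k*t) mod (k*q+1)"
    then obtain t where t: "\<bar>t\<bar> \<le> q - 1" "r = (k*t) mod (k*q+1)" by blast
    show False
    proof (cases "t \<ge> 0")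
      case True
      have "k*t \<le> k*(q-1)" using t True k by (intro mult_left_mono) auto
      moreover have "k*t \<ge> 0" using True k by simp
      moreover have "k*(q-1) = k*q - k" by (simp add: algebra_simps)
      ultimately have "k*t < k*q+1" using k by linarith
      hence rt: "r = k*t" using t \<open>k*t \<ge> 0\<close> by simp
      from R consider "r = 1" | "r = k*q"
        | m j where "r = k*j + m" "2 \<le> m" "m \<le> k - 1" "0 \<le> j" "j \<le> q - 1"
        unfolding Rset_def by blast
      thus False
      proof cases
        case 1 thus False using nomult[of k "t" 1] rt k by auto
      next
        case 2 hence "k*t = k*q" using rt by simp
        hence "t = q" using k by simp
        thus False using t by simp
      next
        case (3 m j) hence "k*(t-j) = m" using rt by (simp add: algebra_simps)
        thus False using nomult[of k "t-j" m] 3 k by auto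
      qed
    next
      case False
      define s where "s = t + q"
      have s: "1 \<le> s" "s \<le> q - 1" using t False s_def by auto
      have "(k*t) mod (k*q+1) = (k*s + 1 + (-1)*(k*q+1)) mod (k*q+1)" by (simp add: s_def algebra_simps)
      also have "\<dots> = (k*s+1) mod (k*q+1)" by (rule mod_mult_self1)
      also have "\<dots> = k*s+1"
      proof -
        have "k*s \<le> k*(q-1)" using s k by (intro mult_left_mono) auto
        moreover have "k*s \<ge> 0" using s k by simp
        moreover have "k*(q-1) = k*q - k" by (simp add: algebra_simps)
        ultimately have "k*s+1 < k*q+1" "0 \<le> k*s+1" using k by linarith+
        thus ?thesis by simp
      qed
      finally have rt: "r = k*s+1" using t by simp
      from R consider "r = 1" | "r = k*q"
        | m j where "r = k*j + m" "2 \<le> m" "m \<le> k - 1" "0 \<le> j" "j \<le> q - 1"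
        unfolding Rset_def by blast
      thus False
      proof cases
        case 1 thus False using rt k s by simp
      next
        case 2 hence "k*(q-s) = 1" using rt by (simp add: algebra_simps)
        thus False using nomult[of k "q-s" 1] k by auto
      next
        case (3 m j) hence "k*(s-j) = m - 1" using rt by (simp add: algebra_simps)
        thus False using nomult[of k "s-j" "m-1"] 3 k by auto
      qed
    qed
  qed
next
  assume N: "\<not> (\<exists>t. \<bar>t\<bar> \<le> q - 1 \<and> r = (k*t) mod (k*q+1))"
  define j where "j = r div k"
  define m where "m = r mod k"
  have rjm: "r = k*j + m" unfolding j_def m_def by simp
  have m: "0 \<le> m" "m < k" using k unfolding m_def by auto
  have j0: "j \<ge> 0" using r k unfolding j_def by (simp add: div_int_pos_iff)
  have jq: "j \<le> q"
  proof (rule ccontr)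
    assume "\<not> j \<le> q"
    hence "k*j \<ge> k*(q+1)" using k by (intro mult_left_mono) auto
    thus False using rjm m r by (simp add: algebra_simps)
  qed
  show "r \<in> Rset q k"
  proof (cases "m \<ge> 2")
    case True
    have "j \<noteq> q" using rjm r True by auto
    hence "j \<le> q - 1" using jq by simp
    thus ?thesis unfolding Rset_def using rjm True m j0 by auto
  next
    case False
    hence "m = 0 \<or> m = 1" using m by auto
    thus ?thesis
    proof
      assume m0: "m = 0"
      show ?thesis
      proof (cases "j = q")
        case True thus ?thesis using rjm m0 by (simp add: Rset_def)
      next
        case False
        hence "\<bar>j\<bar> \<le> q - 1" using jq j0 by simp
        moreover have "r = (k*j) mod (k*q+1)" using rjm m0 r by simp
        ultimately show ?thesis using N by blast
      qed
    next
      assume m1: "m = 1"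
      show ?thesis
      proof (cases "j = 0")
        case True thus ?thesis using rjm m1 by (simp add: Rset_def)
      next
        case False
        have "j \<noteq> q" using rjm m1 r by auto
        hence jq1: "j \<le> q - 1" using jq by simp
        have "(k*(j-q)) mod (k*q+1) = (k*j + 1 + (-1)*(k*q+1)) mod (k*q+1)" by (simp add: algebra_simps)
        also have "\<dots> = (k*j+1) mod (k*q+1)" by (rule mod_mult_self1)
        also have "\<dots> = r" using rjm m1 r by simp
        finally have "r = (k*(j-q)) mod (k*q+1)" by simp
        moreover have "\<bar>j - q\<bar> \<le> q - 1" using False j0 jq1 by auto
        ultimately show ?thesis using N by blast
      qed
    qed
  qed
qed


lemma nonadj:
  assumes q: "q \<ge> 1" and k: "k \<ge> 4" and uv: "u \<in> Gverts q k" "v \<in> Gverts q k"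
  shows "\<not> Gadj q k u v \<longleftrightarrow> (\<exists>t. \<bar>t\<bar> \<le> q - 1 \<and> (v - u) mod (k*q+1) = (k*t) mod (k*q+1))"
proof -
  have "k*q \<ge> k*1" using q k by (intro mult_left_mono) auto
  hence npos: "k*q+1 > 0" using k by linarith
  have r0: "0 \<le> (v - u) mod (k*q+1)" "(v - u) mod (k*q+1) < k*q+1" using npos pos_mod_bound[OF npos, of "v-u"] by auto
  have "\<not> Gadj q k u v \<longleftrightarrow> (v - u) mod (k*q+1) \<notin> Rset q k" using adjR[OF q k, of u v] uv by blast
  also have "\<dots> \<longleftrightarrow> (\<exists>t. \<bar>t\<bar> \<le> q - 1 \<and> (v - u) mod (k*q+1) = (k*t) mod (k*q+1))"
    using R_iff[OF q k r0] by blast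
  finally show ?thesis .
qed

lemma cong_k:
  fixes n k X q :: int
  assumes "n = k*q+1" "n dvd k*X" shows "n dvd X"
proof -
  have "n dvd k*X*q" using assms(2) by simp
  moreover have "n dvd X*n" by simp
  ultimately have "n dvd X*n - k*X*q" by (rule dvd_diff[rotated])
  moreover have "X*n - k*X*q = X" using assms(1) by (simp add: algebra_simps)
  ultimately show ?thesis by simp
qed

theorem lemma2p3:
  fixes q k :: int
  assumes "q \<ge> 1" and "k \<ge> 4"
  shows "twoK2_free (Gverts q k) (Gadj q k)"
  unfolding twoK2_free_def
proof
  assume "\<exists>a\<in>Gverts q k. \<exists>b\<in>Gverts q k. \<exists>c\<in>Gverts q k. \<exists>d\<in>Gverts q k. distinct [a,b,c,d] \<and> Gadj q k a b \<and> Gadj q k c d \<and>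
          \<not> Gadj q k a c \<and> \<not> Gadj q k c a \<and> \<not> Gadj q k a d \<and> \<not> Gadj q k d a \<and>
          \<not> Gadj q k b c \<and> \<not> Gadj q k c b \<and> \<not> Gadj q k b d \<and> \<not> Gadj q k d b"
  then obtain a b c d where V: "a \<in> Gverts q k" "b \<in> Gverts q k" "c \<in> Gverts q k" "d \<in> Gverts q k"
    and ab: "Gadj q k a b" and cd: "Gadj q k c d"
    and nac: "\<not> Gadj q k a c" and nad: "\<not> Gadj q k a d" and nbc: "\<not> Gadj q k b c" and nbd: "\<not> Gadj q k b d"
    by blast
  define n where "n = k*q+1"
  note NA = nonadj[OF assms, folded n_def]
  obtain t1 where t1: "\<bar>t1\<bar> \<le> q - 1" "(c - a) mod n = (k*t1) mod n" using iffD1[OF NA[OF V(1,3)] nac] by blast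
  obtain t2 where t2: "\<bar>t2\<bar> \<le> q - 1" "(d - a) mod n = (k*t2) mod n" using iffD1[OF NA[OF V(1,4)] nad] by blast
  obtain t3 where t3: "\<bar>t3\<bar> \<le> q - 1" "(c - b) mod n = (k*t3) mod n" using iffD1[OF NA[OF V(2,3)] nbc] by blast
  obtain t4 where t4: "\<bar>t4\<bar> \<le> q - 1" "(d - b) mod n = (k*t4) mod n" using iffD1[OF NA[OF V(2,4)] nbd] by blast
  have "((c - a) - (c - b)) mod n = (k*t1 - k*t3) mod n" using t1(2) t3(2) by (rule mod_diff_cong)
  hence e1: "(b - a) mod n = (k*(t1 - t3)) mod n" by (simp add: algebra_simps)
  have "((d - a) - (d - b)) mod n = (k*t2 - k*t4) mod n" using t2(2) t4(2) by (rule mod_diff_cong)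
  hence e2: "(b - a) mod n = (k*(t2 - t4)) mod n" by (simp add: algebra_simps)
  have "((d - a) - (c - a)) mod n = (k*t2 - k*t1) mod n" using t2(2) t1(2) by (rule mod_diff_cong)
  hence e3: "(d - c) mod n = (k*(t2 - t1)) mod n" by (simp add: algebra_simps)
  have A1: "\<not> \<bar>t1 - t3\<bar> \<le> q - 1"
  proof
    assume h: "\<bar>t1 - t3\<bar> \<le> q - 1"
    have "\<not> Gadj q k a b" by (rule iffD2[OF NA[OF V(1,2)]]) (use h e1 in blast)
    thus False using ab by contradiction
  qed
  have A3: "\<not> \<bar>t2 - t1\<bar> \<le> q - 1"
  proof
    assume h: "\<bar>t2 - t1\<bar> \<le> q - 1"
    have "\<not> Gadj q k c d" by (rule iffD2[OF NA[OF V(3,4)]]) (use h e3 in blast)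
    thus False using cd by contradiction
  qed
  have "(k*(t1 - t3)) mod n = (k*(t2 - t4)) mod n" using e1 e2 by simp
  hence "n dvd k*(t1 - t3) - k*(t2 - t4)" by (simp add: mod_eq_dvd_iff)
  hence "n dvd k*((t1 - t3) - (t2 - t4))" by (simp add: algebra_simps)
  hence dX: "n dvd ((t1 - t3) - (t2 - t4))" by (rule cong_k[OF n_def])
  have "k*q \<ge> 4*q" using assms by (intro mult_right_mono) auto
  hence nbig: "n \<ge> 4*q+1" using n_def by simp
  have X0: "(t1 - t3) - (t2 - t4) = 0"
  proof (rule ccontr)
    assume "(t1 - t3) - (t2 - t4) \<noteq> 0"
    hence "\<bar>n\<bar> \<le> \<bar>(t1 - t3) - (t2 - t4)\<bar>" using dX by (rule dvd_imp_le_int)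
    thus False using nbig t1(1) t2(1) t3(1) t4(1) by linarith
  qed
  show False using X0 A1 A3 t1(1) t2(1) t3(1) t4(1) by linarith
qed

end
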